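(* For every standard tableau $T$ of degree $n\ge2$ in which $2$ precedes $1$ in the reading word, $$\overset{*}{\mathbb B}{}_2^{(1)}T=R_{n-1}\bar\sigma_{n-2}\cdots\bar\sigma_1\,r_{(10\to11)}\,\tau_{-1}T.$$ Moreover, for every word $w$ with $(\mathrm{ev}_a,\mathrm{ev}_{a+1})\in\{(1,2),(2,1)\}$, $\sigma_a(w^R)=(\bar\sigma_aw)^R$, where $w^R=w_n\cdots w_1$ is the reversal of $w=w_1\cdots w_n$.
   Context: Tableaux (French convention: rows of lengths $\lambda_1\ge\lambda_2\ge\cdots$ from bottom to top). A tableau is a filling of a diagram, identified with (shape, reading word), the reading word listing the entries row by row from top row to bottom row, each row left to right; word operators act on tableaux via reading words, keeping the shape. Standard tableau of degree $n$: rows increase left to right, columns increase upwards, entries $1,\dots,n$ each once. $T^t$ is the transpose (reflection of diagram and entries across the main diagonal). Word operators (compositions act right to left): $\tau_{-1}$ subtracts $1$ from every letter; $r_{(ab\to cd)}$ applies to a word whose letters in $\{a,b\}$ are, left to right, exactly one $a$ then one $b$, and replaces them by $c$ and $d$ respectively; $R_a$ deletes all letters (cells) equal to $a$; for a word with $(\mathrm{ev}_a,\mathrm{ev}_{a+1})\in\{(1,2),(2,1)\}$ ($\mathrm{ev}_i$ = number of occurrences of $i$) and $b=a+1$, $\sigma_a$ replaces the subword of letters in $\{a,b\}$, in place, via $aab\leftrightarrow abb$, $aba\leftrightarrow bba$, $baa\leftrightarrow bab$, and $\bar\sigma_a$ replaces it via $aab\leftrightarrow bab$, $aba\leftrightarrow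 abb$, $baa\leftrightarrow bba$. For a standard tableau $T$ of degree $n\ge2$ in which $1$ precedes $2$ in the reading word, $\overset{*}{\mathbb B}{}_2^{(0)}T=R_{n-1}\sigma_{n-2}\cdots\sigma_1r_{(01\to11)}\tau_{-1}T$; for a standard $T$ of degree $n\ge2$ in which $2$ precedes $1$, $\overset{*}{\mathbb B}{}_2^{(1)}T=(\overset{*}{\mathbb B}{}_2^{(0)}T^t)^t$. *)

theory Defs
  imports Main "HOL-Library.Multiset"
begin

text \<open>Tableaux (French convention): a tableau is the list of its rows, bottom row first,
  each row listed left to right.  Letters are integers.\<close>

type_synonym word = "int list"
type_synonym tableau = "int list list"

definition reading_word :: "tableau \<Rightarrow> word" where
  "reading_word T = concat (rev T)"

definition shape :: "tableau \<Rightarrow> nat list" where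
  "shape T = map length T"

definition standard_tableau :: "nat \<Rightarrow> tableau \<Rightarrow> bool" where
  "standard_tableau n T \<longleftrightarrow>
     (\<forall>r\<in>set T. r \<noteq> []) \<and>
     sorted_wrt (\<ge>) (shape T) \<and>
     (\<forall>r\<in>set T. sorted_wrt (<) r) \<and>
     (\<forall>i j. Suc i < length T \<and> j < length (T ! Suc i) \<longrightarrow> T ! i ! j < T ! Suc i ! j) \<and>
     mset (concat T) = mset (map int [1..<Suc n])"

definition tab_transpose :: "tableau \<Rightarrow> tableau" where
  "tab_transpose T = transpose T"

definition precedes :: "int \<Rightarrow> int \<Rightarrow> word \<Rightarrow> bool" where
  "precedes x y w \<longleftrightarrow> (\<exists>i j. i < j \<and> j < length w \<and> w ! i = x \<and> w ! j = y)"

fun refill :: "nat list \<Rightarrow> word \<Rightarrow> int list list" where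
  "refill [] w = []"
| "refill (l # ls) w = take l w # refill ls (drop l w)"

definition tab_op :: "(word \<Rightarrow> word) \<Rightarrow> tableau \<Rightarrow> tableau" where
  "tab_op f T = rev (refill (map length (rev T)) (f (reading_word T)))"

definition tau_m1 :: "word \<Rightarrow> word" where
  "tau_m1 w = map (\<lambda>x. x - 1) w"

text \<open>r_(ab -> cd), on its domain: replace the letter a by c and b by d.\<close>
definition r_op :: "int \<Rightarrow> int \<Rightarrow> int \<Rightarrow> int \<Rightarrow> word \<Rightarrow> word" where
  "r_op a b c d w = map (\<lambda>x. if x = a then c else if x = b then d else x) w"

definition R_op :: "int \<Rightarrow> tableau \<Rightarrow> tableau" where
  "R_op a T = filter (\<lambda>r. r \<noteq> []) (map (filter (\<lambda>x. x \<noteq> a)) T)"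

fun replace_sub :: "(int \<Rightarrow> bool) \<Rightarrow> word \<Rightarrow> word \<Rightarrow> word" where
  "replace_sub P [] s = []"
| "replace_sub P (x # xs) s =
     (if P x then hd s # replace_sub P xs (tl s) else x # replace_sub P xs s)"

definition sigma_pat :: "int \<Rightarrow> int \<Rightarrow> word \<Rightarrow> word" where
  "sigma_pat a b s =
    (if s = [a,a,b] then [a,b,b] else if s = [a,b,b] then [a,a,b]
     else if s = [a,b,a] then [b,b,a] else if s = [b,b,a] then [a,b,a]
     else if s = [b,a,a] then [b,a,b] else if s = [b,a,b] then [b,a,a]
     else s)"

definition sigmabar_pat :: "int \<Rightarrow> int \<Rightarrow> word \<Rightarrow> word" where
  "sigmabar_pat a b s =
    (if s = [a,a,b] then [b,a,b] else if s = [b,a,b] then [a,a,b]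
     else if s = [a,b,a] then [a,b,b] else if s = [a,b,b] then [a,b,a]
     else if s = [b,a,a] then [b,b,a] else if s = [b,b,a] then [b,a,a]
     else s)"

definition sigma_op :: "int \<Rightarrow> word \<Rightarrow> word" where
  "sigma_op a w = (let P = (\<lambda>x. x = a \<or> x = a + 1) in
      replace_sub P w (sigma_pat a (a + 1) (filter P w)))"

definition sigmabar_op :: "int \<Rightarrow> word \<Rightarrow> word" where
  "sigmabar_op a w = (let P = (\<lambda>x. x = a \<or> x = a + 1) in
      replace_sub P w (sigmabar_pat a (a + 1) (filter P w)))"

definition sigma_chain :: "nat \<Rightarrow> word \<Rightarrow> word" where
  "sigma_chain n w = fold (\<lambda>a v. sigma_op (int a) v) [1..<n - 1] w"

definition sigmabar_chain :: "nat \<Rightarrow> word \<Rightarrow> word" where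
  "sigmabar_chain n w = fold (\<lambda>a v. sigmabar_op (int a) v) [1..<n - 1] w"

definition B2_0 :: "tableau \<Rightarrow> tableau" where
  "B2_0 T = (let n = length (concat T) in
     R_op (int n - 1) (tab_op (\<lambda>w. sigma_chain n (r_op 0 1 1 1 (tau_m1 w))) T))"

definition B2_1 :: "tableau \<Rightarrow> tableau" where
  "B2_1 T = tab_transpose (B2_0 (tab_transpose T))"

end

theory Submission
  imports Defs
begin

lemma replace_sub_append:
  "replace_sub P (xs @ ys) s = replace_sub P xs s @ replace_sub P ys (drop (length (filter P xs)) s)"
  by (induction xs arbitrary: s) (auto simp: drop_Suc tl_drop)

lemma replace_sub_extra:
  "length (filter P xs) \<le> length s \<Longrightarrow> replace_sub P xs (s @ t) = replace_sub P xs s"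
proof (induction xs arbitrary: s)
  case (Cons x xs)
  show ?case
  proof (cases "P x")
    case True
    then obtain a s' where s: "s = a # s'" using Cons.prems by (cases s) auto
    then show ?thesis using True Cons.prems Cons.IH[of s'] by simp
  next
    case False
    then show ?thesis using Cons.prems Cons.IH[of s] by simp
  qed
qed simp

lemma replace_sub_rev:
  "length s = length (filter P w) \<Longrightarrow> replace_sub P (rev w) (rev s) = rev (replace_sub P w s)"
proof (induction w arbitrary: s)
  case (Cons x xs)
  show ?case
  proof (cases "P x")
    case True
    then obtain s0 s' where s: "s = s0 # s'" using Cons.prems by (cases s) auto
    have l: "length s' = length (filter P xs)" using Cons.prems True s by simp
    have "replace_sub P (rev (x # xs)) (rev s) =
          replace_sub P (rev xs) (rev s' @ [s0]) @ replace_sub P [x] (drop (length (filter P (rev xs))) (rev s' @ [s0]))"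
      by (simp add: s replace_sub_append)
    also have "\<dots> = rev (replace_sub P xs s') @ [s0]"
      using replace_sub_extra[of P "rev xs" "rev s'" "[s0]"] l Cons.IH[OF l] True
      by (simp add: rev_filter[symmetric])
    finally show ?thesis using True s by simp
  next
    case False
    have l: "length s = length (filter P xs)" using Cons.prems False by simp
    show ?thesis using False Cons.IH[OF l] l
      by (simp add: replace_sub_append rev_filter[symmetric])
  qed
qed simp

lemma sigma_pat_rev: "a \<noteq> b \<Longrightarrow> sigma_pat a b (rev s) = rev (sigmabar_pat a b s)"
  unfolding sigma_pat_def sigmabar_pat_def
  by (auto simp: rev_swap)

lemma length_sigma_pat: "length (sigma_pat a b s) = length s"
  unfolding sigma_pat_def by auto

lemma length_sigmabar_pat: "length (sigmabar_pat a b s) = length s"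
  unfolding sigmabar_pat_def by auto

lemma sigma_rev: "sigma_op a (rev w) = rev (sigmabar_op a w)"
proof -
  let ?P = "\<lambda>x. x = a \<or> x = a + 1"
  have "sigma_op a (rev w) = replace_sub ?P (rev w) (sigma_pat a (a+1) (rev (filter ?P w)))"
    by (simp add: sigma_op_def Let_def rev_filter)
  also have "\<dots> = replace_sub ?P (rev w) (rev (sigmabar_pat a (a+1) (filter ?P w)))"
    by (simp add: sigma_pat_rev)
  also have "\<dots> = rev (replace_sub ?P w (sigmabar_pat a (a+1) (filter ?P w)))"
    by (rule replace_sub_rev) (simp add: length_sigmabar_pat)
  finally show ?thesis by (simp add: sigmabar_op_def Let_def)
qed

lemma sigmabar_chain_rev: "sigmabar_chain n w = rev (sigma_chain n (rev w))"
proof -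
  have "\<And>w. fold (\<lambda>a v. sigmabar_op (int a) v) xs w = rev (fold (\<lambda>a v. sigma_op (int a) v) xs (rev w))" for xs
    by (induction xs) (simp_all add: sigma_rev)
  then show ?thesis by (simp add: sigmabar_chain_def sigma_chain_def)
qed

lemma prec_Nil[simp]: "\<not> precedes x y []"
  by (simp add: precedes_def)

lemma prec_Cons: "precedes x y (z # v) \<longleftrightarrow> (z = x \<and> y \<in> set v) \<or> precedes x y v"
proof
  assume "precedes x y (z # v)"
  then obtain i j where ij: "i < j" "j < length (z#v)" "(z#v) ! i = x" "(z#v) ! j = y"
    unfolding precedes_def by blast
  show "(z = x \<and> y \<in> set v) \<or> precedes x y v"
  proof (cases i)
    case 0
    then obtain j' where "j = Suc j'" using ij by (cases j) auto
    then show ?thesis using ij 0 by (auto simp: in_set_conv_nth)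
  next
    case (Suc i')
    then obtain j' where "j = Suc j'" using ij by (cases j) auto
    then show ?thesis using ij Suc unfolding precedes_def by auto
  qed
next
  assume "(z = x \<and> y \<in> set v) \<or> precedes x y v"
  then show "precedes x y (z # v)"
  proof
    assume "z = x \<and> y \<in> set v"
    then obtain j where "j < length v" "v ! j = y" by (auto simp: in_set_conv_nth)
    then show ?thesis unfolding precedes_def using \<open>z = x \<and> y \<in> set v\<close>
      by (intro exI[of _ 0] exI[of _ "Suc j"]) auto
  next
    assume "precedes x y v"
    then obtain i j where "i < j" "j < length v" "v ! i = x" "v ! j = y" unfolding precedes_def by blast
    then show ?thesis unfolding precedes_def by (intro exI[of _ "Suc i"] exI[of _ "Suc j"]) auto
  qed
qed

lemma prec_set: "precedes x y u \<Longrightarrow> x \<in> set u \<and> y \<in> set u"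
  by (induction u) (auto simp: prec_Cons)

lemma prec_filter: "precedes x y (filter Q u) \<Longrightarrow> precedes x y u"
  by (induction u) (auto simp: prec_Cons split: if_splits)

lemma prec_filter_iff: "Q x \<Longrightarrow> Q y \<Longrightarrow> precedes x y (filter Q u) \<longleftrightarrow> precedes x y u"
  by (induction u) (auto simp: prec_Cons)

lemma prec_asym: "distinct u \<Longrightarrow> precedes x y u \<Longrightarrow> \<not> precedes y x u"
  by (induction u) (auto simp: prec_Cons dest: prec_set)

lemma prec_irrefl: "distinct u \<Longrightarrow> \<not> precedes x x u"
  using prec_asym by blast

lemma prec_total: "x \<in> set u \<Longrightarrow> y \<in> set u \<Longrightarrow> x \<noteq> y \<Longrightarrow> precedes x y u \<or> precedes y x u"
  by (induction u) (auto simp: prec_Cons)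

lemma prec_append: "precedes x y (r @ w) \<longleftrightarrow> precedes x y r \<or> precedes x y w \<or> (x \<in> set r \<and> y \<in> set w)"
  by (induction r) (auto simp: prec_Cons)

lemma prec_rev: "precedes x y (rev u) \<longleftrightarrow> precedes y x u"
  by (induction u) (auto simp: prec_Cons prec_append dest: prec_set)

definition atc :: "int list list \<Rightarrow> int \<Rightarrow> nat \<Rightarrow> nat \<Rightarrow> bool" where
  "atc M x i j \<longleftrightarrow> i < length M \<and> j < length (M ! i) \<and> M ! i ! j = x"

lemma prec_row: "precedes x y r \<longleftrightarrow> (\<exists>j j'. j < j' \<and> j' < length r \<and> r ! j = x \<and> r ! j' = y)"
  by (simp add: precedes_def)

lemma prec_concat: "precedes x y (concat M) \<longleftrightarrow>
   (\<exists>i j i' j'. atc M x i j \<and> atc M y i' j' \<and> (i < i' \<or> i = i' \<and> j < j'))"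
proof (induction M)
  case Nil
  then show ?case by (simp add: atc_def)
next
  case (Cons r M)
  have atC: "atc (r # M) x i j \<longleftrightarrow> (if i = 0 then j < length r \<and> r ! j = x else atc M x (i - 1) j)" for x i j
    by (cases i) (auto simp: atc_def)
  show ?case
  proof
    assume "precedes x y (concat (r # M))"
    then have "precedes x y r \<or> precedes x y (concat M) \<or> (x \<in> set r \<and> y \<in> set (concat M))"
      by (simp add: prec_append)
    then show "\<exists>i j i' j'. atc (r#M) x i j \<and> atc (r#M) y i' j' \<and> (i < i' \<or> i = i' \<and> j < j')"
    proof (elim disjE)
      assume "precedes x y r"
      then obtain j j' where "j < j'" "j' < length r" "r ! j = x" "r ! j' = y" by (auto simp: prec_row)
      then show ?thesis by (intro exI[of _ 0] exI[of _ j] exI[of _ 0] exI[of _ j']) (auto simp: atC)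
    next
      assume "precedes x y (concat M)"
      then obtain i j i' j' where "atc M x i j" "atc M y i' j'" "i < i' \<or> i = i' \<and> j < j'"
        using Cons.IH by blast
      then show ?thesis by (intro exI[of _ "Suc i"] exI[of _ j] exI[of _ "Suc i'"] exI[of _ j']) (auto simp: atC)
    next
      assume "x \<in> set r \<and> y \<in> set (concat M)"
      then obtain j where j: "j < length r" "r ! j = x" by (auto simp: in_set_conv_nth)
      from \<open>x \<in> set r \<and> y \<in> set (concat M)\<close> obtain r' where "r' \<in> set M" "y \<in> set r'" by auto
      then obtain i' j' where "i' < length M" "M ! i' = r'" "j' < length r'" "r' ! j' = y"
        by (auto simp: in_set_conv_nth)
      then show ?thesis using j
        by (intro exI[of _ 0] exI[of _ j] exI[of _ "Suc i'"] exI[of _ j']) (auto simp: atC atc_def)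
    qed
  next
    assume "\<exists>i j i' j'. atc (r#M) x i j \<and> atc (r#M) y i' j' \<and> (i < i' \<or> i = i' \<and> j < j')"
    then obtain i j i' j' where h: "atc (r#M) x i j" "atc (r#M) y i' j'" "i < i' \<or> i = i' \<and> j < j'" by blast
    show "precedes x y (concat (r # M))"
    proof (cases i)
      case 0
      note i0 = this
      show ?thesis
      proof (cases i')
        case 0
        then have "precedes x y r" using h i0 unfolding prec_row by (auto simp: atC)
        then show ?thesis by (simp add: prec_append)
      next
        case (Suc k)
        then have "y \<in> set (concat M)" using h by (auto simp: atC atc_def intro!: bexI[of _ "M!k"])
        moreover have "x \<in> set r" using h i0 by (auto simp: atC)
        ultimately show ?thesis by (simp add: prec_append)
      qed
    next
      case (Suc k)
      then obtain k' where "i' = Suc k'" using h by (cases i') auto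
      then have "precedes x y (concat M)" using h Suc Cons.IH by (auto simp: atC)
      then show ?thesis by (simp add: prec_append)
    qed
  qed
qed

definition betw :: "(int \<Rightarrow> int \<Rightarrow> bool) \<Rightarrow> int \<Rightarrow> int \<Rightarrow> int \<Rightarrow> bool" where
  "betw lt p z q \<longleftrightarrow> lt p z \<and> lt z q \<or> lt q z \<and> lt z p"

definition stay :: "(int \<Rightarrow> int \<Rightarrow> bool) \<Rightarrow> int \<Rightarrow> int \<Rightarrow> int \<Rightarrow> int" where
  "stay lt p q z = (if betw lt p z q then (if lt p q then q else p) else (if lt p q then p else q))"

definition othr :: "(int \<Rightarrow> int \<Rightarrow> bool) \<Rightarrow> int \<Rightarrow> int \<Rightarrow> int \<Rightarrow> int" where
  "othr lt p q z = (if betw lt p z q then (if lt p q then p else q) else (if lt p q then q else p))"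

fun pr :: "(int \<Rightarrow> int \<Rightarrow> bool) \<Rightarrow> nat \<Rightarrow> int \<times> int" where
  "pr lt 0 = (1, 2)"
| "pr lt (Suc m) = (othr lt (fst (pr lt m)) (snd (pr lt m)) (int m + 3), int m + 3)"

fun lab :: "(int \<Rightarrow> int \<Rightarrow> bool) \<Rightarrow> nat \<Rightarrow> int \<Rightarrow> int" where
  "lab lt 0 x = (if x - 1 = 0 then 1 else if x - 1 = 1 then 1 else x - 1)"
| "lab lt (Suc m) x = (if lab lt m x = int m + 1 \<or> lab lt m x = int m + 2 then
      (if x = stay lt (fst (pr lt m)) (snd (pr lt m)) (int m + 3) then int m + 1 else int m + 2)
     else lab lt m x)"

lemma stay_othr: "p \<noteq> q \<Longrightarrow> {stay lt p q z, othr lt p q z} = {p, q} \<and> stay lt p q z \<noteq> othr lt p q z"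
  by (auto simp: stay_def othr_def)

definition LabInv :: "(int \<Rightarrow> int \<Rightarrow> bool) \<Rightarrow> nat \<Rightarrow> bool" where
  "LabInv lt m \<longleftrightarrow> (let p = fst (pr lt m); q = snd (pr lt m) in
     p \<noteq> q \<and> 1 \<le> p \<and> p \<le> int m + 2 \<and> 1 \<le> q \<and> q \<le> int m + 2 \<and>
     (\<forall>x \<ge> 1. (x \<ge> int m + 3 \<longrightarrow> lab lt m x = x - 1) \<and>
              (x = p \<or> x = q \<longrightarrow> lab lt m x = int m + 1) \<and>
              (x \<le> int m + 2 \<and> x \<noteq> p \<and> x \<noteq> q \<longrightarrow> lab lt m x \<le> int m)))"

lemma LabInv_all: "LabInv lt m"
proof (induction m)
  case 0
  then show ?case by (auto simp: LabInv_def)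
next
  case (Suc m)
  define p where "p = fst (pr lt m)"
  define q where "q = snd (pr lt m)"
  define z where "z = int m + 3"
  have I: "p \<noteq> q" "1 \<le> p" "p \<le> int m + 2" "1 \<le> q" "q \<le> int m + 2"
    "\<And>x. x \<ge> 1 \<Longrightarrow> x \<ge> int m + 3 \<Longrightarrow> lab lt m x = x - 1"
    "\<And>x. x = p \<or> x = q \<Longrightarrow> lab lt m x = int m + 1"
    "\<And>x. x \<ge> 1 \<Longrightarrow> x \<le> int m + 2 \<Longrightarrow> x \<noteq> p \<Longrightarrow> x \<noteq> q \<Longrightarrow> lab lt m x \<le> int m"
    using Suc unfolding LabInv_def Let_def p_def q_def by auto
  have so: "{stay lt p q z, othr lt p q z} = {p, q}" "stay lt p q z \<noteq> othr lt p q z"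
    using stay_othr[OF I(1)] by auto
  have oin: "othr lt p q z \<in> {p,q}" "stay lt p q z \<in> {p,q}" using so by blast+
  have pr': "pr lt (Suc m) = (othr lt p q z, z)" by (simp add: p_def q_def z_def)
  have lab': "lab lt (Suc m) x = (if lab lt m x = int m + 1 \<or> lab lt m x = int m + 2 then
      (if x = stay lt p q z then int m + 1 else int m + 2) else lab lt m x)" for x
    by (simp add: p_def q_def z_def)
  show ?case unfolding LabInv_def Let_def pr' fst_conv snd_conv
  proof (intro conjI allI impI)
    show "othr lt p q z \<noteq> z" using oin I unfolding z_def by auto
    show "1 \<le> othr lt p q z" "othr lt p q z \<le> int (Suc m) + 2" using oin I by auto
    show "1 \<le> z" "z \<le> int (Suc m) + 2" unfolding z_def by auto
  next
    fix x :: int assume "1 \<le> x" "int (Suc m) + 3 \<le> x"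
    then show "lab lt (Suc m) x = x - 1" using I(6)[of x] by (simp del: lab.simps add: lab')
  next
    fix x :: int assume "1 \<le> x" "x = othr lt p q z \<or> x = z"
    then have "x = othr lt p q z \<or> x = z" by simp
    then show "lab lt (Suc m) x = int (Suc m) + 1"
    proof
      assume "x = othr lt p q z"
      then have "x = p \<or> x = q" "x \<noteq> stay lt p q z" using so by auto
      then show ?thesis using I(7)[of x] by (simp del: lab.simps add: lab')
    next
      assume "x = z"
      then have "x \<noteq> stay lt p q z" using oin I unfolding z_def by auto
      then show ?thesis using I(6)[of x] \<open>x = z\<close> by (simp del: lab.simps add: lab' z_def)
    qed
  next
    fix x :: int assume h: "1 \<le> x" "x \<le> int (Suc m) + 2 \<and> x \<noteq> othr lt p q z \<and> x \<noteq> z"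
    show "lab lt (Suc m) x \<le> int (Suc m)"
    proof (cases "x = p \<or> x = q")
      case True
      then have "x = stay lt p q z" using so h by auto
      then show ?thesis using I(7)[of x] True by (simp del: lab.simps add: lab')
    next
      case False
      then have "x \<le> int m + 2" using h unfolding z_def by auto
      then show ?thesis using I(8)[of x] h False by (simp del: lab.simps add: lab')
    qed
  qed
qed

lemma replace_sub_map:
  "replace_sub P (map f u) (map g (filter (\<lambda>x. P (f x)) u)) = map (\<lambda>x. if P (f x) then g x else f x) u"
  by (induction u) auto

lemma key_perm:
  assumes d: "distinct [l1,l2,l3]" and s: "{l1,l2,l3} = {p,q,z}"
    and o: "lt l1 l2" "lt l2 l3" "lt l1 l3" "\<not>lt l2 l1" "\<not>lt l3 l2" "\<not> lt l3 l1"
    and f: "f p = a" "f q = a" "f z = a+1"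
    and g: "\<And>x. x \<in> {p,q,z} \<Longrightarrow> g x = (if x = stay lt p q z then a else a+1)"
  shows "sigma_pat a (a+1) [f l1, f l2, f l3] = [g l1, g l2, g l3]"
proof -
  have c3: "card (set [l1,l2,l3]) = 3" using d by (simp only: distinct_card) simp
  then have c: "card {p,q,z} = 3" using s by simp
  have pqz: "p \<noteq> q" "p \<noteq> z" "q \<noteq> z"
    using c by (auto simp: card_insert_if split: if_splits)
  have m: "l1 \<in> {p,q,z}" "l2 \<in> {p,q,z}" "l3 \<in> {p,q,z}" "p \<in> {l1,l2,l3}" "q \<in> {l1,l2,l3}" "z \<in> {l1,l2,l3}"
    using s by blast+
  have "(l1=p \<and> l2=q \<and> l3=z) \<or> (l1=p \<and> l2=z \<and> l3=q) \<or> (l1=q \<and> l2=p \<and> l3=z) \<or>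
        (l1=q \<and> l2=z \<and> l3=p) \<or> (l1=z \<and> l2=p \<and> l3=q) \<or> (l1=z \<and> l2=q \<and> l3=p)"
    using m d pqz by auto
  then show ?thesis
    using o pqz by (elim disjE) (auto simp: f g sigma_pat_def stay_def betw_def)
qed

lemma step_word:
  assumes du: "distinct u" and pos: "\<forall>x\<in>set u. x \<ge> 1" and zin: "int m + 3 \<in> set u"
    and pin: "fst (pr lt m) \<in> set u" and qin: "snd (pr lt m) \<in> set u"
    and lt: "lt = (\<lambda>x y. precedes x y u)"
  shows "sigma_op (int (Suc m)) (map (lab lt m) u) = map (lab lt (Suc m)) u"
proof -
  define p where "p = fst (pr lt m)"
  define q where "q = snd (pr lt m)"
  define z where "z = int m + 3"
  define a where "a = int (Suc m)"
  have I: "p \<noteq> q" "1 \<le> p" "p \<le> int m + 2" "1 \<le> q" "q \<le> int m + 2"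
    "\<And>x. x \<ge> 1 \<Longrightarrow> x \<ge> int m + 3 \<Longrightarrow> lab lt m x = x - 1"
    "\<And>x. x = p \<or> x = q \<Longrightarrow> lab lt m x = int m + 1"
    "\<And>x. x \<ge> 1 \<Longrightarrow> x \<le> int m + 2 \<Longrightarrow> x \<noteq> p \<Longrightarrow> x \<noteq> q \<Longrightarrow> lab lt m x \<le> int m"
    using LabInv_all[of lt m] unfolding LabInv_def Let_def p_def q_def by auto
  define P where "P = (\<lambda>y::int. y = int (Suc m) \<or> y = int (Suc m) + 1)"
  have H1: "P (lab lt m x) \<longleftrightarrow> x = p \<or> x = q \<or> x = z" if "x \<in> set u" for x
  proof -
    have "x \<ge> 1" using pos that by auto
    consider "x \<ge> int m + 3" | "x = p \<or> x = q" | "x \<le> int m + 2" "x \<noteq> p" "x \<noteq> q" by linarith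
    then show ?thesis
    proof cases
      case 1 then show ?thesis using I(6)[OF \<open>x \<ge> 1\<close>] I(3,5) by (auto simp: P_def z_def)
    next
      case 2 then show ?thesis using I(7)[of x] by (auto simp: P_def)
    next
      case 3 then show ?thesis using I(8)[OF \<open>x \<ge> 1\<close>] by (auto simp: P_def z_def)
    qed
  qed
  define L where "L = filter (\<lambda>x. P (lab lt m x)) u"
  have L2: "L = filter (\<lambda>x. x = p \<or> x = q \<or> x = z) u"
    unfolding L_def using H1 by (rule filter_cong[OF refl])
  have dL: "distinct L" using du by (simp add: L_def)
  have sL: "set L = {p,q,z}" using L2 zin pin qin by (auto simp: p_def q_def z_def)
  have pqz: "p \<noteq> q" "p \<noteq> z" "q \<noteq> z" using I unfolding z_def by auto
  have "length L = 3" using distinct_card[OF dL] sL pqz by simp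
  then obtain l1 l2 l3 where L3: "L = [l1,l2,l3]"
    by (cases L; cases "tl L"; cases "tl (tl L)") (auto simp: numeral_3_eq_3)
  have precL: "precedes l1 l2 L" "precedes l2 l3 L" "precedes l1 l3 L" by (auto simp: L3 prec_Cons)
  have precu: "lt l1 l2" "lt l2 l3" "lt l1 l3" using precL unfolding lt L_def by (auto dest: prec_filter)
  have nprec: "\<not>lt l2 l1" "\<not>lt l3 l2" "\<not> lt l3 l1" using precu prec_asym[OF du] unfolding lt by auto
  have ff: "lab lt m p = a" "lab lt m q = a" "lab lt m z = a + 1"
    using I(6)[of z] I(7) by (auto simp: a_def z_def)
  have gg: "lab lt (Suc m) x = (if x = stay lt p q z then a else a+1)" if "x \<in> {p,q,z}" for x
    using that ff I(6)[of z] by (auto simp: a_def z_def p_def q_def)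
  have key: "sigma_pat a (a+1) (map (lab lt m) L) = map (lab lt (Suc m)) L"
    unfolding L3 using key_perm[of l1 l2 l3 p q z lt "lab lt m" a "lab lt (Suc m)"] dL sL precu nprec ff gg
    by (simp add: L3)
  have "sigma_op (int (Suc m)) (map (lab lt m) u) =
        replace_sub P (map (lab lt m) u) (sigma_pat a (a+1) (map (lab lt m) L))"
    by (simp add: sigma_op_def Let_def P_def L_def filter_map comp_def a_def)
  also have "\<dots> = replace_sub P (map (lab lt m) u) (map (lab lt (Suc m)) L)"
    by (simp only: key)
  also have "\<dots> = map (\<lambda>x. if P (lab lt m x) then lab lt (Suc m) x else lab lt m x) u"
    unfolding L_def by (rule replace_sub_map)
  also have "\<dots> = map (lab lt (Suc m)) u"
    by (auto simp: P_def)
  finally show ?thesis .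
qed

lemma chain_word:
  assumes du: "distinct u" and su: "set u = {1..int n}" and n2: "n \<ge> 2"
  shows "sigma_chain n (r_op 0 1 1 1 (tau_m1 u)) = map (lab (\<lambda>x y. precedes x y u) (n - 2)) u"
proof -
  define lt where "lt = (\<lambda>x y. precedes x y u)"
  have "fold (\<lambda>a v. sigma_op (int a) v) [1..<Suc m] (map (lab lt 0) u) = map (lab lt m) u"
    if "m \<le> n - 2" for m
    using that
  proof (induction m)
    case 0
    then show ?case by simp
  next
    case (Suc m)
    have I: "1 \<le> fst (pr lt m)" "fst (pr lt m) \<le> int m + 2" "1 \<le> snd (pr lt m)" "snd (pr lt m) \<le> int m + 2"
      using LabInv_all[of lt m] unfolding LabInv_def Let_def by auto
    have "fold (\<lambda>a v. sigma_op (int a) v) [1..<Suc (Suc m)] (map (lab lt 0) u)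
        = sigma_op (int (Suc m)) (map (lab lt m) u)"
    proof -
      have e: "[1..<Suc (Suc m)] = [1..<Suc m] @ [Suc m]" by simp
      have ih: "fold (\<lambda>a v. sigma_op (int a) v) [1..<Suc m] (map (lab lt 0) u) = map (lab lt m) u"
        by (rule Suc.IH) (use Suc.prems in simp)
      show ?thesis unfolding e fold_append o_apply ih by simp
    qed
    also have "\<dots> = map (lab lt (Suc m)) u"
      using Suc.prems I
      by (intro step_word[OF du]) (auto simp: su lt_def)
    finally show ?case .
  qed
  moreover have "[1..<n - 1] = [1..<Suc (n - 2)]"
  proof -
    have e: "n - 1 = Suc (n - 2)" using n2 by arith
    show ?thesis by (simp only: e)
  qed
  ultimately have "fold (\<lambda>a v. sigma_op (int a) v) [1..<n - 1] (map (lab lt 0) u) = map (lab lt (n-2)) u"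
    by simp
  moreover have "r_op 0 1 1 1 (tau_m1 u) = map (lab lt 0) u"
    by (simp add: r_op_def tau_m1_def)
  ultimately show ?thesis by (simp add: sigma_chain_def lt_def)
qed

definition ordA :: "(int \<Rightarrow> nat) \<Rightarrow> (int \<Rightarrow> nat) \<Rightarrow> int \<Rightarrow> int \<Rightarrow> bool" where
  "ordA ro co x y \<longleftrightarrow> co x > co y \<or> (co x = co y \<and> ro x < ro y)"

definition ordB :: "(int \<Rightarrow> nat) \<Rightarrow> (int \<Rightarrow> nat) \<Rightarrow> int \<Rightarrow> int \<Rightarrow> bool" where
  "ordB ro co x y \<longleftrightarrow> ro x < ro y \<or> (ro x = ro y \<and> co x > co y)"

definition GI :: "(int \<Rightarrow> nat) \<Rightarrow> (int \<Rightarrow> nat) \<Rightarrow> nat \<Rightarrow> int \<Rightarrow> int \<Rightarrow> bool" where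
  "GI ro co m p q \<longleftrightarrow> p \<noteq> q \<and> p \<in> {1..int m + 2} \<and> q \<in> {1..int m + 2} \<and>
     ro p \<noteq> ro q \<and> (ro p > ro q \<longrightarrow> co p \<le> co q) \<and> (ro q > ro p \<longrightarrow> co q \<le> co p) \<and>
     (\<forall>y\<in>{1..int m + 2}. y \<noteq> p \<longrightarrow> y \<noteq> q \<longrightarrow>
        \<not>(ro p \<le> ro y \<and> co p \<le> co y) \<and> \<not>(ro q \<le> ro y \<and> co q \<le> co y))"

lemma pr_agree:
  assumes "\<forall>m<K. \<forall>x\<in>{fst (pr lt1 m), snd (pr lt1 m), int m + 3}. \<forall>y\<in>{fst (pr lt1 m), snd (pr lt1 m), int m + 3}. lt1 x y = lt2 x y"
  shows "m \<le> K \<Longrightarrow> pr lt1 m = pr lt2 m \<and> lab lt1 m = lab lt2 m"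
proof (induction m)
  case 0
  then show ?case by (auto simp: fun_eq_iff)
next
  case (Suc m)
  then have ih: "pr lt1 m = pr lt2 m" "lab lt1 m = lab lt2 m" by auto
  have s: "stay lt1 (fst (pr lt1 m)) (snd (pr lt1 m)) (int m + 3) = stay lt2 (fst (pr lt1 m)) (snd (pr lt1 m)) (int m + 3)"
       "othr lt1 (fst (pr lt1 m)) (snd (pr lt1 m)) (int m + 3) = othr lt2 (fst (pr lt1 m)) (snd (pr lt1 m)) (int m + 3)"
    using assms Suc.prems by (auto simp: stay_def othr_def betw_def)
  show ?case using ih s by (auto simp: fun_eq_iff)
qed

locale geo =
  fixes ro co :: "int \<Rightarrow> nat" and n :: nat
  assumes inj: "x \<in> {1..int n} \<Longrightarrow> y \<in> {1..int n} \<Longrightarrow> ro x = ro y \<Longrightarrow> co x = co y \<Longrightarrow> x = y"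
    and mono: "x \<in> {1..int n} \<Longrightarrow> y \<in> {1..int n} \<Longrightarrow> ro x \<le> ro y \<Longrightarrow> co x \<le> co y \<Longrightarrow> x \<le> y"
    and shp: "y \<in> {1..int n} \<Longrightarrow> r \<le> ro y \<Longrightarrow> c \<le> co y \<Longrightarrow> \<exists>x\<in>{1..int n}. ro x = r \<and> co x = c"
begin

lemma core:
  assumes XY: "X \<noteq> Y" "X \<in> {1..int m + 2}" "Y \<in> {1..int m + 2}" "ro Y < ro X" "co X \<le> co Y"
    and Str: "\<forall>y\<in>{1..int m + 2}. y \<noteq> X \<longrightarrow> y \<noteq> Y \<longrightarrow>
        \<not>(ro X \<le> ro y \<and> co X \<le> co y) \<and> \<not>(ro Y \<le> ro y \<and> co Y \<le> co y)"
    and zn: "int m + 3 \<le> int n"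
  defines "z \<equiv> int m + 3"
  defines "Ob \<equiv> (if betw (ordB ro co) Y z X then Y else X)"
  defines "R \<equiv> (if betw (ordB ro co) Y z X then X else Y)"
  shows "\<not>(ro X < ro z \<and> co X < co z)" "\<not>(ro Y < ro z \<and> co Y < co z)"
    "\<not>(ro z \<le> ro X \<and> co z \<le> co X)" "\<not>(ro z \<le> ro Y \<and> co z \<le> co Y)"
    "ro Ob \<noteq> ro z" "ro Ob > ro z \<longrightarrow> co Ob \<le> co z" "ro z > ro Ob \<longrightarrow> co z \<le> co Ob"
    "\<not>(ro Ob \<le> ro R \<and> co Ob \<le> co R)"
proof -
  have zr: "z \<in> {1..int n}" using zn unfolding z_def by auto
  have Xr: "X \<in> {1..int n}" "Y \<in> {1..int n}" using XY zn by auto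
  have notNE: "\<not>(ro W < ro z \<and> co W < co z)" if W: "W = X \<or> W = Y" for W
  proof
    assume h: "ro W < ro z \<and> co W < co z"
    obtain x1 where x1: "x1 \<in> {1..int n}" "ro x1 = ro W" "co x1 = co z" using shp[OF zr, of "ro W" "co z"] h by auto
    obtain x2 where x2: "x2 \<in> {1..int n}" "ro x2 = ro z" "co x2 = co W" using shp[OF zr, of "ro z" "co W"] h by auto
    have "x1 \<le> z" using mono[OF x1(1) zr] x1 h by auto
    moreover have "x1 \<noteq> z" using x1 h by auto
    ultimately have x1r: "x1 \<in> {1..int m + 2}" using x1 unfolding z_def by auto
    have "x2 \<le> z" using mono[OF x2(1) zr] x2 h by auto
    moreover have "x2 \<noteq> z" using x2 h by auto
    ultimately have x2r: "x2 \<in> {1..int m + 2}" using x2 unfolding z_def by auto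
    have "x1 = X \<or> x1 = Y"
    proof (rule ccontr)
      assume "\<not> (x1 = X \<or> x1 = Y)"
      then have "\<not>(ro W \<le> ro x1 \<and> co W \<le> co x1)" using Str x1r W by auto
      then show False using x1 h by auto
    qed
    moreover have "x2 = X \<or> x2 = Y"
    proof (rule ccontr)
      assume "\<not> (x2 = X \<or> x2 = Y)"
      then have "\<not>(ro W \<le> ro x2 \<and> co W \<le> co x2)" using Str x2r W by auto
      then show False using x2 h by auto
    qed
    moreover have "x1 \<noteq> W" "x2 \<noteq> W" "x1 \<noteq> x2" using x1 x2 h by auto
    ultimately show False using W by auto
  qed
  have notSW: "\<not>(ro z \<le> ro W \<and> co z \<le> co W)" if W: "W = X \<or> W = Y" for W
  proof
    assume "ro z \<le> ro W \<and> co z \<le> co W"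
    then have "z \<le> W" using mono[OF zr, of W] Xr W by auto
    then show False using W XY unfolding z_def by auto
  qed
  show "\<not>(ro X < ro z \<and> co X < co z)" "\<not>(ro Y < ro z \<and> co Y < co z)"
    "\<not>(ro z \<le> ro X \<and> co z \<le> co X)" "\<not>(ro z \<le> ro Y \<and> co z \<le> co Y)"
    using notNE notSW by auto
  note nX = notNE[of X] notSW[of X] and nY = notNE[of Y] notSW[of Y]
  show "ro Ob \<noteq> ro z"
  proof (cases "betw (ordB ro co) Y z X")
    case True
    show ?thesis
    proof
      assume e: "ro Ob = ro z"
      then have e': "ro Y = ro z" using True unfolding Ob_def by simp
      then have "co z > co Y" using nY by auto
      then have "\<not> ordB ro co Y z" "\<not> ordB ro co X z" using e' XY(4) unfolding ordB_def by auto
      then show False using True unfolding betw_def by blast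
    qed
  next
    case False
    show ?thesis
    proof
      assume e: "ro Ob = ro z"
      then have e': "ro X = ro z" using False unfolding Ob_def by simp
      then have "co z > co X" using nX by auto
      then have "ordB ro co Y z" "ordB ro co z X" using e' XY(4) unfolding ordB_def by auto
      then show False using False unfolding betw_def by blast
    qed
  qed
  have ObXY: "Ob = X \<or> Ob = Y" unfolding Ob_def by auto
  show "ro Ob > ro z \<longrightarrow> co Ob \<le> co z" "ro z > ro Ob \<longrightarrow> co z \<le> co Ob"
    using notNE[OF ObXY] notSW[OF ObXY] by auto
  show "\<not>(ro Ob \<le> ro R \<and> co Ob \<le> co R)"
  proof
    assume h: "ro Ob \<le> ro R \<and> co Ob \<le> co R"
    have b: "betw (ordB ro co) Y z X" and ce: "co X = co Y"
      using h XY(4,5) unfolding Ob_def R_def by (auto split: if_splits)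
    have b1: "ordB ro co Y z" "ordB ro co z X"
      using b XY(4) unfolding betw_def ordB_def by auto
    show False
    proof (cases "ro z = ro Y \<or> ro z = ro X")
      case True
      then show ?thesis using b1 nX nY ce unfolding ordB_def by auto
    next
      case False
      then have rz: "ro Y < ro z" "ro z < ro X" using b1 unfolding ordB_def by auto
      show ?thesis
      proof (cases "co z > co Y")
        case True then show ?thesis using nY rz by auto
      next
        case False
        obtain w where w: "w \<in> {1..int n}" "ro w = ro z" "co w = co Y"
          using shp[OF Xr(1), of "ro z" "co Y"] rz ce by auto
        have "w \<le> X" using mono[OF w(1) Xr(1)] w rz ce by auto
        then have wr: "w \<in> {1..int m + 2}" using w XY by auto
        have "w \<noteq> X" "w \<noteq> Y" using w rz by auto
        then show ?thesis using Str wr w rz by auto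
      qed
    qed
  qed
qed

lemma GI_step:
  assumes G: "GI ro co m p q" and zn: "int m + 3 \<le> int n"
  shows "GI ro co (Suc m) (othr (ordB ro co) p q (int m + 3)) (int m + 3)"
    "\<forall>x\<in>{p,q,int m+3}. \<forall>y\<in>{p,q,int m+3}. ordA ro co x y = ordB ro co x y"
proof -
  define z where "z = int m + 3"
  define X where "X = (if ro p > ro q then p else q)"
  define Y where "Y = (if ro p > ro q then q else p)"
  have g: "p \<noteq> q" "p \<in> {1..int m + 2}" "q \<in> {1..int m + 2}" "ro p \<noteq> ro q"
     "ro p > ro q \<longrightarrow> co p \<le> co q" "ro q > ro p \<longrightarrow> co q \<le> co p"
     "\<forall>y\<in>{1..int m + 2}. y \<noteq> p \<longrightarrow> y \<noteq> q \<longrightarrow>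
        \<not>(ro p \<le> ro y \<and> co p \<le> co y) \<and> \<not>(ro q \<le> ro y \<and> co q \<le> co y)"
    using G unfolding GI_def by auto
  have XY: "X \<noteq> Y" "X \<in> {1..int m + 2}" "Y \<in> {1..int m + 2}" "ro Y < ro X" "co X \<le> co Y"
    using g unfolding X_def Y_def by auto
  have pqXY: "{p,q} = {X,Y}" unfolding X_def Y_def by auto
  have Str: "\<forall>y\<in>{1..int m + 2}. y \<noteq> X \<longrightarrow> y \<noteq> Y \<longrightarrow>
        \<not>(ro X \<le> ro y \<and> co X \<le> co y) \<and> \<not>(ro Y \<le> ro y \<and> co Y \<le> co y)"
    using g(7) unfolding X_def Y_def by auto
  note c = core[OF XY Str zn, folded z_def]
  define Ob where "Ob = (if betw (ordB ro co) Y z X then Y else X)"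
  define R where "R = (if betw (ordB ro co) Y z X then X else Y)"
  have oth: "othr (ordB ro co) p q z = Ob"
    using g(4) unfolding Ob_def X_def Y_def othr_def betw_def ordB_def by auto
  have zr: "z \<in> {1..int n}" using zn unfolding z_def by auto
  have rng: "X \<in> {1..int n}" "Y \<in> {1..int n}" using XY zn by auto
  show "GI ro co (Suc m) (othr (ordB ro co) p q (int m + 3)) (int m + 3)"
    unfolding z_def[symmetric] oth GI_def
  proof (intro conjI ballI impI)
    show "Ob \<noteq> z" "Ob \<in> {1..int (Suc m) + 2}" "z \<in> {1..int (Suc m) + 2}"
      using XY unfolding Ob_def z_def by auto
    show "ro Ob \<noteq> ro z" "ro z < ro Ob \<Longrightarrow> co Ob \<le> co z" "ro Ob < ro z \<Longrightarrow> co z \<le> co Ob"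
      using c(5-7) unfolding Ob_def by auto
  next
    fix y assume y: "y \<in> {1..int (Suc m) + 2}" "y \<noteq> Ob" "y \<noteq> z"
    then have yr: "y \<in> {1..int n}" "y < z" using zn unfolding z_def by auto
    show "\<not> (ro z \<le> ro y \<and> co z \<le> co y)"
      using mono[OF zr yr(1)] yr by auto
    show "\<not> (ro Ob \<le> ro y \<and> co Ob \<le> co y)"
    proof (cases "y = X \<or> y = Y")
      case True
      then have "y = R" using y(2) XY(1) unfolding Ob_def R_def by auto
      then show ?thesis using c(8) unfolding Ob_def R_def by auto
    next
      case False
      then have "y \<in> {1..int m + 2}" using y yr unfolding z_def by auto
      then show ?thesis using Str False unfolding Ob_def by auto
    qed
  qed
  have agr: "ordA ro co x y = ordB ro co x y" if "x \<in> {X,Y,z}" "y \<in> {X,Y,z}" for x y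
  proof (cases "x = y")
    case True then show ?thesis by (simp add: ordA_def ordB_def)
  next
    case False
    have xr: "x \<in> {1..int n}" "y \<in> {1..int n}" using that rng zr by auto
    have ne: "ro x \<noteq> ro y \<or> co x \<noteq> co y" using inj[OF xr] False by auto
    have "\<not>(ro x < ro y \<and> co x < co y)" "\<not>(ro y < ro x \<and> co y < co x)"
      using that c(1-4) XY(4,5) by auto
    then show ?thesis using ne unfolding ordA_def ordB_def by auto
  qed
  show "\<forall>x\<in>{p,q,int m+3}. \<forall>y\<in>{p,q,int m+3}. ordA ro co x y = ordB ro co x y"
    using agr pqXY unfolding z_def by auto
qed

lemma GI_all:
  assumes G0: "GI ro co 0 1 2"
  shows "m \<le> n - 2 \<Longrightarrow> GI ro co m (fst (pr (ordB ro co) m)) (snd (pr (ordB ro co) m))"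
proof (induction m)
  case 0 then show ?case using G0 by simp
next
  case (Suc m)
  then show ?case using GI_step(1)[of m] by auto
qed

lemma agree_AB:
  assumes G0: "GI ro co 0 1 2"
  shows "\<forall>m<n-2. \<forall>x\<in>{fst (pr (ordB ro co) m), snd (pr (ordB ro co) m), int m + 3}.
     \<forall>y\<in>{fst (pr (ordB ro co) m), snd (pr (ordB ro co) m), int m + 3}. ordB ro co x y = ordA ro co x y"
proof (intro allI impI)
  fix m assume m: "m < n - 2"
  then have "int m + 3 \<le> int n" by linarith
  moreover have "GI ro co m (fst (pr (ordB ro co) m)) (snd (pr (ordB ro co) m))"
    using GI_all[OF G0] m by simp
  ultimately show "\<forall>x\<in>{fst (pr (ordB ro co) m), snd (pr (ordB ro co) m), int m + 3}.
     \<forall>y\<in>{fst (pr (ordB ro co) m), snd (pr (ordB ro co) m), int m + 3}. ordB ro co x y = ordA ro co x y"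
    using GI_step(2) by metis
qed

end

lemma at_rev: "atc (rev M) x i j \<longleftrightarrow> i < length M \<and> atc M x (length M - Suc i) j"
  by (auto simp: atc_def rev_nth)

lemma at_transpose:
  assumes s: "sorted (rev (map length M))"
  shows "atc (transpose M) x i j \<longleftrightarrow> atc M x j i"
proof
  assume h: "atc (transpose M) x i j"
  then have i: "i < length (transpose M)" by (simp add: atc_def)
  have j: "j < length (filter (\<lambda>ys. i < length ys) M)"
    using h nth_transpose[OF i] by (simp add: atc_def)
  then have j': "j < length (takeWhile (\<lambda>ys. i < length ys) M)"
    using filter_equals_takeWhile_sorted_rev[OF s, of i] by simp
  have "takeWhile (\<lambda>ys. i < length ys) M ! j = M ! j" using takeWhile_nth[OF j'] .
  moreover have "takeWhile (\<lambda>ys. i < length ys) M ! j \<in> set (takeWhile (\<lambda>ys. i < length ys) M)"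
    using j' by (rule nth_mem)
  ultimately have "i < length (M ! j)" by (auto dest: set_takeWhileD)
  moreover have "j < length M" using j' length_takeWhile_le[of "\<lambda>ys. i < length ys" M] by linarith
  moreover have "transpose M ! i ! j = M ! j ! i" using nth_nth_transpose_sorted[OF s i j] .
  ultimately show "atc M x j i" using h by (simp add: atc_def)
next
  assume h: "atc M x j i"
  then have jl: "j < length M" "i < length (M ! j)" by (auto simp: atc_def)
  have "length (M ! j) \<le> length (M ! 0)"
  proof -
    have "map length M ! j \<le> map length M ! 0" using sorted_rev_nth_mono[OF s, of 0 j] jl by simp
    then show ?thesis using jl by (metis gr_zeroI less_nat_zero_code nth_map)
  qed
  then have i: "i < length (transpose M)"
    using length_transpose_sorted[OF s] jl by auto
  have "Suc j \<le> length (takeWhile (\<lambda>ys. i < length ys) M)"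
  proof (rule length_takeWhile_less_P_nth)
    fix k assume "k < Suc j"
    then have "length (M ! j) \<le> length (M ! k)"
      using sorted_rev_nth_mono[OF s, of k j] jl by simp
    then show "i < length (M ! k)" using jl by simp
  qed (use jl in simp)
  then have j: "j < length (filter (\<lambda>ys. i < length ys) M)"
    using filter_equals_takeWhile_sorted_rev[OF s, of i] by simp
  have "transpose M ! i ! j = M ! j ! i" using nth_nth_transpose_sorted[OF s i j] .
  then show "atc (transpose M) x i j"
    using i j h nth_transpose[OF i] by (simp add: atc_def)
qed

lemma at_ex_set: "x \<in> set (concat M) \<longleftrightarrow> (\<exists>i j. atc M x i j)"
proof
  assume "x \<in> set (concat M)"
  then obtain r where r: "r \<in> set M" "x \<in> set r" by auto
  then obtain i j where "i < length M" "M ! i = r" "j < length r" "r ! j = x" by (auto simp: in_set_conv_nth)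
  then show "\<exists>i j. atc M x i j" by (auto simp: atc_def)
next
  assume "\<exists>i j. atc M x i j"
  then obtain i j where "atc M x i j" by blast
  then have "M ! i \<in> set M" "x \<in> set (M ! i)" by (auto simp: atc_def)
  then show "x \<in> set (concat M)" by auto
qed

lemma distinct_concat_at:
  "distinct (concat M) \<longleftrightarrow> (\<forall>x i j i' j'. atc M x i j \<longrightarrow> atc M x i' j' \<longrightarrow> i = i' \<and> j = j')"
proof (induction M)
  case Nil
  then show ?case by (simp add: atc_def)
next
  case (Cons r M)
  have atC: "atc (r # M) x i j \<longleftrightarrow> (if i = 0 then j < length r \<and> r ! j = x else atc M x (i - 1) j)" for x i j
    by (cases i) (auto simp: atc_def)
  show ?case
  proof
    assume d: "distinct (concat (r # M))"
    then have d1: "distinct r" "distinct (concat M)" "set r \<inter> set (concat M) = {}" by auto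
    show "\<forall>x i j i' j'. atc (r#M) x i j \<longrightarrow> atc (r#M) x i' j' \<longrightarrow> i = i' \<and> j = j'"
    proof (intro allI impI)
      fix x i j i' j' assume a: "atc (r#M) x i j" "atc (r#M) x i' j'"
      show "i = i' \<and> j = j'"
      proof (cases "i = 0"; cases "i' = 0")
        assume "i = 0" "i' = 0"
        then show ?thesis using a d1(1) by (auto simp: atC nth_eq_iff_index_eq)
      next
        assume "i = 0" "i' \<noteq> 0"
        then have "x \<in> set r" "\<exists>i j. atc M x i j" using a by (auto simp: atC)
        then have "x \<in> set r" "x \<in> set (concat M)" using at_ex_set by blast+
        then show ?thesis using d1(3) by auto
      next
        assume "i \<noteq> 0" "i' = 0"
        then have "x \<in> set r" "\<exists>i j. atc M x i j" using a by (auto simp: atC)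
        then have "x \<in> set r" "x \<in> set (concat M)" using at_ex_set by blast+
        then show ?thesis using d1(3) by auto
      next
        assume "i \<noteq> 0" "i' \<noteq> 0"
        then have "atc M x (i - 1) j" "atc M x (i' - 1) j'" using a by (auto simp: atC)
        then have "i - 1 = i' - 1 \<and> j = j'" using d1(2) Cons.IH by blast
        then show ?thesis using \<open>i \<noteq> 0\<close> \<open>i' \<noteq> 0\<close> by auto
      qed
    qed
  next
    assume u: "\<forall>x i j i' j'. atc (r#M) x i j \<longrightarrow> atc (r#M) x i' j' \<longrightarrow> i = i' \<and> j = j'"
    have "distinct r"
      unfolding distinct_conv_nth
    proof (intro allI impI)
      fix j j' assume "j < length r" "j' < length r" "j \<noteq> j'"
      then show "r ! j \<noteq> r ! j'" using u[rule_format, of "r ! j" 0 j 0 j'] by (auto simp: atC)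
    qed
    moreover have "distinct (concat M)"
      using Cons.IH u by (metis Suc_eq_plus1 add_diff_cancel_right' atC nat.inject nat.simps(3))
    moreover have "set r \<inter> set (concat M) = {}"
    proof (rule ccontr)
      assume "set r \<inter> set (concat M) \<noteq> {}"
      then obtain x where "x \<in> set r" "x \<in> set (concat M)" by auto
      then obtain j where "j < length r" "r ! j = x"
        by (auto simp: in_set_conv_nth)
      moreover obtain i' j' where "atc M x i' j'" using \<open>x \<in> set (concat M)\<close> at_ex_set by blast
      ultimately show False using u[rule_format, of x 0 j "Suc i'" j'] by (auto simp: atC)
    qed
    ultimately show "distinct (concat (r # M))" by simp
  qed
qed

lemma set_transpose_nonempty: "r \<in> set (transpose M) \<Longrightarrow> r \<noteq> []"
proof -
  assume "r \<in> set (transpose M)"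
  then obtain i where i: "i < length (transpose M)" "r = transpose M ! i" by (auto simp: in_set_conv_nth)
  have "\<exists>ys\<in>set M. i < length ys" if "i < foldr (\<lambda>xs. max (length xs)) M 0" for i
    using that by (induction M) (auto simp: max_def split: if_splits)
  then obtain ys where "ys \<in> set M" "i < length ys" using i(1) by (auto simp: length_transpose)
  then show "r \<noteq> []" using i nth_transpose[OF i(1)] by (auto simp: filter_empty_conv)
qed

lemma at_ext:
  assumes "\<forall>r\<in>set A. r \<noteq> []" "\<forall>r\<in>set B. r \<noteq> []" "\<And>x i j. atc A x i j \<longleftrightarrow> atc B x i j"
  shows "A = B"
proof -
  have row: "i < length A \<longleftrightarrow> i < length B" for i
  proof
    assume "i < length A"
    then have "atc A (A ! i ! 0) i 0" using assms(1) by (auto simp: atc_def)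
    then show "i < length B" using assms(3) by (auto simp: atc_def)
  next
    assume "i < length B"
    then have "atc B (B ! i ! 0) i 0" using assms(2) by (auto simp: atc_def)
    then show "i < length A" using assms(3) by (auto simp: atc_def)
  qed
  then have len: "length A = length B" by (metis nat_neq_iff)
  show ?thesis
  proof (rule nth_equalityI[OF len])
    fix i assume i: "i < length A"
    have col: "j < length (A ! i) \<longleftrightarrow> j < length (B ! i)" for j
    proof
      assume "j < length (A ! i)"
      then have "atc A (A ! i ! j) i j" using i by (auto simp: atc_def)
      then show "j < length (B ! i)" using assms(3) by (auto simp: atc_def)
    next
      assume "j < length (B ! i)"
      then have "atc B (B ! i ! j) i j" using i len by (auto simp: atc_def)
      then show "j < length (A ! i)" using assms(3) by (auto simp: atc_def)
    qed
    then have l2: "length (A ! i) = length (B ! i)" by (metis nat_neq_iff)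
    show "A ! i = B ! i"
    proof (rule nth_equalityI[OF l2])
      fix j assume "j < length (A ! i)"
      then have "atc A (A ! i ! j) i j" using i by (auto simp: atc_def)
      then have "atc B (A ! i ! j) i j" using assms(3) by blast
      then show "A ! i ! j = B ! i ! j" by (simp add: atc_def)
    qed
  qed
qed

lemma FT: "(\<forall>j j'. j \<le> j' \<longrightarrow> j' < length r \<longrightarrow> \<not> P (r ! j) \<longrightarrow> \<not> P (r ! j')) \<Longrightarrow> filter P r = takeWhile P r"
proof (induction r)
  case (Cons a r)
  show ?case
  proof (cases "P a")
    case True
    have "\<forall>j j'. j \<le> j' \<longrightarrow> j' < length r \<longrightarrow> \<not> P (r ! j) \<longrightarrow> \<not> P (r ! j')"
      using Cons.prems by (metis Suc_le_mono Suc_less_eq length_Cons nth_Cons_Suc)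
    then show ?thesis using True Cons.IH by simp
  next
    case False
    have "\<forall>x\<in>set r. \<not> P x"
    proof
      fix x assume "x \<in> set r"
      then obtain k where "k < length r" "r ! k = x" by (auto simp: in_set_conv_nth)
      then show "\<not> P x" using Cons.prems[rule_format, of 0 "Suc k"] False by auto
    qed
    then show ?thesis using False by (simp add: filter_empty_conv)
  qed
qed simp

lemma allSuc: "(\<forall>k\<le>Suc j. Q k) \<longleftrightarrow> Q 0 \<and> (\<forall>k\<le>j. Q (Suc k))"
proof
  assume "\<forall>k\<le>Suc j. Q k"
  then show "Q 0 \<and> (\<forall>k\<le>j. Q (Suc k))" by auto
next
  assume h: "Q 0 \<and> (\<forall>k\<le>j. Q (Suc k))"
  show "\<forall>k\<le>Suc j. Q k"
  proof (intro allI impI)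
    fix k assume "k \<le> Suc j"
    then show "Q k" using h by (cases k) auto
  qed
qed

lemma TWlen: "j < length (takeWhile P xs) \<longleftrightarrow> j < length xs \<and> (\<forall>k\<le>j. P (xs ! k))"
proof (induction xs arbitrary: j)
  case (Cons a xs)
  show ?case
  proof (cases j)
    case 0
    then show ?thesis by simp
  next
    case (Suc j')
    then show ?thesis using Cons.IH[of j'] by (simp only: allSuc) simp
  qed
qed simp

definition UC :: "int \<Rightarrow> int list list \<Rightarrow> bool" where
  "UC v N \<longleftrightarrow> (\<forall>i j i' j'. atc N v i j \<longrightarrow> i \<le> i' \<longrightarrow> j \<le> j' \<longrightarrow> i' < length N \<longrightarrow> j' < length (N ! i') \<longrightarrow> N ! i' ! j' = v)"

lemma sorted_rev_iff: "sorted (rev (xs::nat list)) \<longleftrightarrow> (\<forall>i j. i < j \<longrightarrow> j < length xs \<longrightarrow> xs ! j \<le> xs ! i)"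
proof -
  have "sorted (rev xs) = sorted_wrt (\<lambda>x y. y \<le> x) xs" by (rule sorted_wrt_rev)
  then show ?thesis by (simp add: sorted_wrt_iff_nth_less)
qed

lemma at_R:
  assumes ne: "\<forall>r\<in>set N. r \<noteq> []" and uc: "UC v N"
  shows "atc (R_op v N) x i j \<longleftrightarrow> atc N x i j \<and> x \<noteq> v"
proof -
  have rowFT: "filter (\<lambda>x. x \<noteq> v) r = takeWhile (\<lambda>x. x \<noteq> v) r" if rN: "r \<in> set N" for r
  proof (rule FT, intro allI impI)
    fix k k' assume h: "k \<le> k'" "k' < length r" "\<not> r ! k \<noteq> v"
    obtain i where i: "i < length N" "N ! i = r" using rN by (auto simp: in_set_conv_nth)
    have "atc N v i k" using i h by (auto simp: atc_def)
    then show "\<not> r ! k' \<noteq> v" using uc h i unfolding UC_def by auto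
  qed
  define L where "L = map (takeWhile (\<lambda>x. x \<noteq> v)) N"
  have e1: "map (filter (\<lambda>x. x \<noteq> v)) N = L" unfolding L_def using rowFT by simp
  have Lnil: "L ! k = [] \<longleftrightarrow> N ! k ! 0 = v" if "k < length N" for k
  proof -
    have "N ! k \<noteq> []" using ne that by auto
    then show ?thesis using that by (auto simp: L_def takeWhile_eq_Nil_iff hd_conv_nth)
  qed
  have e2: "filter (\<lambda>r. r \<noteq> []) L = takeWhile (\<lambda>r. r \<noteq> []) L"
  proof (rule FT, intro allI impI)
    fix k k' assume h: "k \<le> k'" "k' < length L" "\<not> L ! k \<noteq> []"
    have "atc N v k 0" using h Lnil[of k] ne by (auto simp: atc_def L_def)
    moreover have "0 < length (N ! k')" using ne h by (auto simp: L_def)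
    ultimately have "N ! k' ! 0 = v" using uc h unfolding UC_def L_def by auto
    then show "\<not> L ! k' \<noteq> []" using Lnil h by (auto simp: L_def)
  qed
  have R: "R_op v N = takeWhile (\<lambda>r. r \<noteq> []) L" unfolding R_op_def e1 e2 ..
  have "atc (R_op v N) x i j \<longleftrightarrow>
        (i < length N \<and> (\<forall>k\<le>i. N ! k ! 0 \<noteq> v)) \<and> (j < length (N ! i) \<and> (\<forall>k\<le>j. N ! i ! k \<noteq> v)) \<and> N ! i ! j = x"
  proof -
    have a: "i < length (takeWhile (\<lambda>r. r \<noteq> []) L) \<longleftrightarrow> i < length N \<and> (\<forall>k\<le>i. N ! k ! 0 \<noteq> v)"
      unfolding TWlen using Lnil by (auto simp: L_def)
    show ?thesis
    proof (cases "i < length (takeWhile (\<lambda>r. r \<noteq> []) L)")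
      case True
      then have "takeWhile (\<lambda>r. r \<noteq> []) L ! i = takeWhile (\<lambda>x. x \<noteq> v) (N ! i)"
        using a by (simp add: takeWhile_nth L_def)
      moreover have "j < length (takeWhile (\<lambda>x. x \<noteq> v) (N ! i)) \<Longrightarrow> takeWhile (\<lambda>x. x \<noteq> v) (N ! i) ! j = N ! i ! j"
        by (rule takeWhile_nth)
      moreover have tw: "j < length (takeWhile (\<lambda>x. x \<noteq> v) (N ! i)) \<longleftrightarrow> j < length (N ! i) \<and> (\<forall>k\<le>j. N ! i ! k \<noteq> v)"
        by (rule TWlen)
      ultimately show ?thesis using True a unfolding R atc_def by (metis (no_types, lifting))
    next
      case False
      then show ?thesis using a unfolding R atc_def by auto
    qed
  qed
  also have "\<dots> \<longleftrightarrow> atc N x i j \<and> x \<noteq> v"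
  proof
    assume "atc N x i j \<and> x \<noteq> v"
    then have h: "i < length N" "j < length (N ! i)" "N ! i ! j = x" "x \<noteq> v" by (auto simp: atc_def)
    have "N ! k ! 0 \<noteq> v" if "k \<le> i" for k
    proof
      assume "N ! k ! 0 = v"
      then have "atc N v k 0" using ne h that by (auto simp: atc_def)
      then show False using uc h that unfolding UC_def by auto
    qed
    moreover have "N ! i ! k \<noteq> v" if "k \<le> j" for k
    proof
      assume "N ! i ! k = v"
      then have "atc N v i k" using h that by (auto simp: atc_def)
      then show False using uc h that unfolding UC_def by auto
    qed
    ultimately show "(i < length N \<and> (\<forall>k\<le>i. N ! k ! 0 \<noteq> v)) \<and> (j < length (N ! i) \<and> (\<forall>k\<le>j. N ! i ! k \<noteq> v)) \<and> N ! i ! j = x"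
      using h by auto
  qed (auto simp: atc_def)
  finally show ?thesis .
qed

lemma R_ne: "\<forall>r\<in>set (R_op v N). r \<noteq> []"
  by (simp add: R_op_def)

lemma shape_cell:
  assumes s: "sorted (rev (map length N))" and "i \<le> i'" "i' < length N" "j < length (N ! i')"
  shows "j < length (N ! i)"
proof -
  have "map length N ! i' \<le> map length N ! i"
    using sorted_rev_nth_mono[OF s, of i i'] assms by simp
  then show ?thesis using assms by simp
qed

lemma UC_D: "UC v N \<Longrightarrow> atc N v i j \<Longrightarrow> i \<le> i' \<Longrightarrow> j \<le> j' \<Longrightarrow> i' < length N \<Longrightarrow> j' < length (N ! i') \<Longrightarrow> N ! i' ! j' = v"
  unfolding UC_def by blast

lemma R_sorted:
  assumes s: "sorted (rev (map length N))" and ne: "\<forall>r\<in>set N. r \<noteq> []" and uc: "UC v N"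
  shows "sorted (rev (map length (R_op v N)))"
  unfolding sorted_rev_iff
proof (intro allI impI)
  fix i i' assume h: "i < i'" "i' < length (map length (R_op v N))"
  have "j < length (R_op v N ! i)" if j: "j < length (R_op v N ! i')" for j
  proof -
    have "atc (R_op v N) (R_op v N ! i' ! j) i' j" using h j by (auto simp: atc_def)
    then have a: "atc N (R_op v N ! i' ! j) i' j" "R_op v N ! i' ! j \<noteq> v" using at_R[OF ne uc] by auto
    have a': "i' < length N" "j < length (N ! i')" "N ! i' ! j = R_op v N ! i' ! j" using a(1) by (auto simp: atc_def)
    have c: "i < length N" "j < length (N ! i)" using shape_cell[OF s, of i i' j] h a' by auto
    have "N ! i ! j \<noteq> v"
    proof
      assume "N ! i ! j = v"
      then have "atc N v i j" using c by (auto simp: atc_def)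
      from UC_D[OF uc this, of i' j] h a' a(2) show False by auto
    qed
    then have "atc (R_op v N) (N ! i ! j) i j" using at_R[OF ne uc] c by (auto simp: atc_def)
    then show ?thesis by (simp add: atc_def)
  qed
  then have "length (R_op v N ! i') \<le> length (R_op v N ! i)"
    by (metis not_le order.refl)
  then show "map length (R_op v N) ! i' \<le> map length (R_op v N) ! i" using h by simp
qed

lemma UC_transpose:
  assumes s: "sorted (rev (map length M))" and uc: "UC v M"
  shows "UC v (transpose M)"
  unfolding UC_def
proof (intro allI impI)
  fix i j i' j' assume h: "atc (transpose M) v i j" "i \<le> i'" "j \<le> j'" "i' < length (transpose M)" "j' < length (transpose M ! i')"
  have "atc (transpose M) (transpose M ! i' ! j') i' j'" using h by (auto simp: atc_def)
  then have a: "atc M (transpose M ! i' ! j') j' i'" using at_transpose[OF s] by blast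
  have "atc M v j i" using h at_transpose[OF s] by blast
  from UC_D[OF uc this, of j' i'] a h have "M ! j' ! i' = v" by (auto simp: atc_def)
  then show "transpose M ! i' ! j' = v" using a by (simp add: atc_def)
qed

lemma RT:
  assumes s: "sorted (rev (map length M))" and ne: "\<forall>r\<in>set M. r \<noteq> []" and uc: "UC v M"
  shows "transpose (R_op v (transpose M)) = R_op v M"
proof (rule at_ext)
  show "\<forall>r\<in>set (transpose (R_op v (transpose M))). r \<noteq> []" using set_transpose_nonempty by blast
  show "\<forall>r\<in>set (R_op v M). r \<noteq> []" by (rule R_ne)
  have st: "sorted (rev (map length (transpose M)))" by simp
  have net: "\<forall>r\<in>set (transpose M). r \<noteq> []" using set_transpose_nonempty by blast
  have uct: "UC v (transpose M)" by (rule UC_transpose[OF s uc])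
  have sr: "sorted (rev (map length (R_op v (transpose M))))" by (rule R_sorted[OF st net uct])
  fix x i j
  show "atc (transpose (R_op v (transpose M))) x i j \<longleftrightarrow> atc (R_op v M) x i j"
  proof -
    have "atc (transpose (R_op v (transpose M))) x i j \<longleftrightarrow> atc (R_op v (transpose M)) x j i"
      by (rule at_transpose[OF sr])
    also have "\<dots> \<longleftrightarrow> atc (transpose M) x j i \<and> x \<noteq> v" by (rule at_R[OF net uct])
    also have "\<dots> \<longleftrightarrow> atc M x i j \<and> x \<noteq> v" using at_transpose[OF s] by simp
    also have "\<dots> \<longleftrightarrow> atc (R_op v M) x i j" using at_R[OF ne uc] by simp
    finally show ?thesis .
  qed
qed

lemma set_upt_int: "set (map int [1..<Suc n]) = {1..int n}"
proof
  show "set (map int [1..<Suc n]) \<subseteq> {1..int n}" by auto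
  show "{1..int n} \<subseteq> set (map int [1..<Suc n])"
  proof
    fix x assume "x \<in> {1..int n}"
    then have "x = int (nat x)" "nat x \<in> set [1..<Suc n]" by auto
    then show "x \<in> set (map int [1..<Suc n])" by (metis image_eqI set_map)
  qed
qed

lemma std_facts:
  assumes "standard_tableau n T"
  shows "\<forall>r\<in>set T. r \<noteq> []" "sorted (rev (map length T))" "distinct (concat T)"
    "set (concat T) = {1..int n}"
    "\<And>i j j'. i < length T \<Longrightarrow> j < j' \<Longrightarrow> j' < length (T ! i) \<Longrightarrow> T ! i ! j < T ! i ! j'"
    "\<And>i j. Suc i < length T \<Longrightarrow> j < length (T ! Suc i) \<Longrightarrow> T ! i ! j < T ! Suc i ! j"
proof -
  have a: "\<forall>r\<in>set T. r \<noteq> []" "sorted_wrt (\<ge>) (map length T)" "\<forall>r\<in>set T. sorted_wrt (<) r"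
    "\<forall>i j. Suc i < length T \<and> j < length (T ! Suc i) \<longrightarrow> T ! i ! j < T ! Suc i ! j"
    "mset (concat T) = mset (map int [1..<Suc n])"
    using assms unfolding standard_tableau_def shape_def by auto
  show "\<forall>r\<in>set T. r \<noteq> []" using a(1) .
  show "sorted (rev (map length T))" using a(2) by (simp add: sorted_wrt_rev)
  show "distinct (concat T)" using mset_eq_imp_distinct_iff[OF a(5)] by (simp add: distinct_map)
  have "set (concat T) = set (map int [1..<Suc n])" using arg_cong[OF a(5), of set_mset] by simp
  then show "set (concat T) = {1..int n}" by (simp only: set_upt_int)
  show "\<And>i j j'. i < length T \<Longrightarrow> j < j' \<Longrightarrow> j' < length (T ! i) \<Longrightarrow> T ! i ! j < T ! i ! j'"
    using a(3) by (meson nth_mem sorted_wrt_nth_less)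
  show "\<And>i j. Suc i < length T \<Longrightarrow> j < length (T ! Suc i) \<Longrightarrow> T ! i ! j < T ! Suc i ! j"
    using a(4) by blast
qed

lemma std_mono:
  assumes st: "standard_tableau n T" and x: "atc T x i j" and y: "atc T y i' j'" and "i \<le> i'" "j \<le> j'"
  shows "x \<le> y"
proof -
  note f = std_facts[OF st]
  have col: "T ! i ! c \<le> T ! (i + d) ! c" if "i + d < length T" "c < length (T ! (i + d))" for d c
    using that
  proof (induction d)
    case 0 then show ?case by simp
  next
    case (Suc d)
    have "c < length (T ! (i + d))" using shape_cell[OF f(2), of "i + d" "i + Suc d" c] Suc.prems by simp
    then have "T ! i ! c \<le> T ! (i + d) ! c" using Suc by simp
    also have "\<dots> < T ! Suc (i + d) ! c" using f(6)[of "i + d" c] Suc.prems by simp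
    finally show ?case by simp
  qed
  have il: "i' < length T" "j' < length (T ! i')" using y by (auto simp: atc_def)
  have jl: "j' < length (T ! i)" using shape_cell[OF f(2) \<open>i \<le> i'\<close> il] .
  have "x \<le> T ! i ! j'"
    using x f(5)[of i j j'] jl \<open>j \<le> j'\<close> by (cases "j = j'") (auto simp: atc_def)
  also have "\<dots> \<le> T ! i' ! j'" using col[of "i' - i" j'] il \<open>i \<le> i'\<close> by simp
  finally show ?thesis using y by (simp add: atc_def)
qed

definition cellT :: "int list list \<Rightarrow> int \<Rightarrow> nat \<times> nat" where
  "cellT T x = (SOME p. atc T x (fst p) (snd p))"

definition roT :: "int list list \<Rightarrow> int \<Rightarrow> nat" where "roT T x = fst (cellT T x)"
definition coT :: "int list list \<Rightarrow> int \<Rightarrow> nat" where "coT T x = snd (cellT T x)"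

lemma cellT_at: "x \<in> set (concat T) \<Longrightarrow> atc T x (roT T x) (coT T x)"
proof -
  assume "x \<in> set (concat T)"
  then obtain i j where "atc T x i j" using at_ex_set by blast
  then have "\<exists>p. atc T x (fst p) (snd p)" by (intro exI[of _ "(i,j)"]) simp
  then show ?thesis unfolding roT_def coT_def cellT_def by (rule someI_ex)
qed

lemma cellT_uniq: "distinct (concat T) \<Longrightarrow> atc T x i j \<Longrightarrow> roT T x = i \<and> coT T x = j"
proof -
  assume d: "distinct (concat T)" and a: "atc T x i j"
  then have "x \<in> set (concat T)" using at_ex_set by blast
  then have "atc T x (roT T x) (coT T x)" by (rule cellT_at)
  then show ?thesis using d a distinct_concat_at by metis
qed

lemma std_geo: assumes st: "standard_tableau n T" shows "geo (roT T) (coT T) n"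
proof -
  note f = std_facts[OF st]
  have c: "atc T x (roT T x) (coT T x)" if "x \<in> {1..int n}" for x using cellT_at f(4) that by blast
  show ?thesis
  proof
    fix x y assume h: "x \<in> {1..int n}" "y \<in> {1..int n}" "roT T x = roT T y" "coT T x = coT T y"
    then show "x = y" using c[OF h(1)] c[OF h(2)] by (auto simp: atc_def)
  next
    fix x y assume h: "x \<in> {1..int n}" "y \<in> {1..int n}" "roT T x \<le> roT T y" "coT T x \<le> coT T y"
    then show "x \<le> y" using std_mono[OF st c[OF h(1)] c[OF h(2)]] by simp
  next
    fix y r c' assume h: "y \<in> {1..int n}" "r \<le> roT T y" "c' \<le> coT T y"
    have cy: "atc T y (roT T y) (coT T y)" using c[OF h(1)] .
    then have "r < length T" using h by (auto simp: atc_def)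
    moreover have "c' < length (T ! r)" using shape_cell[OF f(2) h(2)] cy h(3) by (auto simp: atc_def)
    ultimately have a: "atc T (T ! r ! c') r c'" by (simp add: atc_def)
    then have "T ! r ! c' \<in> {1..int n}" using at_ex_set f(4) by blast
    moreover have "roT T (T ! r ! c') = r \<and> coT T (T ! r ! c') = c'" using cellT_uniq[OF f(3) a] .
    ultimately show "\<exists>x\<in>{1..int n}. roT T x = r \<and> coT T x = c'" by blast
  qed
qed

lemma distinct_concat_rev: "distinct (concat (rev (A::int list list))) \<longleftrightarrow> distinct (concat A)"
  unfolding distinct_concat_at at_rev
proof safe
  fix x i j i' j'
  assume u: "\<forall>x i j i' j'. (i < length A \<and> atc A x (length A - Suc i) j) \<longrightarrow>
      (i' < length A \<and> atc A x (length A - Suc i') j') \<longrightarrow> i = i' \<and> j = j'"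
    and a: "atc A x i j" "atc A x i' j'"
  have l: "i < length A" "i' < length A" using a by (auto simp: atc_def)
  have "length A - Suc (length A - Suc i) = i" "length A - Suc (length A - Suc i') = i'" using l by auto
  have "length A - Suc i = length A - Suc i' \<and> j = j'"
    using u[rule_format, of "length A - Suc i" x j "length A - Suc i'" j'] a l by auto
  then show "i = i'" "j = j'" using l by auto
next
  fix x i j i' j'
  assume u: "\<forall>x i j i' j'. atc A x i j \<longrightarrow> atc A x i' j' \<longrightarrow> i = i' \<and> j = j'"
    and a: "i < length A" "atc A x (length A - Suc i) j" "i' < length A" "atc A x (length A - Suc i') j'"
  then have "length A - Suc i = length A - Suc i'" "j = j'" by blast+
  then show "i = i'" "j = j'" using a by auto
qed

lemma set_concat_rev: "set (concat (rev A)) = set (concat A)" by auto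

lemma distinct_concat_transpose:
  assumes s: "sorted (rev (map length (A::int list list)))"
  shows "distinct (concat (transpose A)) \<longleftrightarrow> distinct (concat A)"
  unfolding distinct_concat_at at_transpose[OF s] by blast

lemma set_concat_transpose:
  assumes s: "sorted (rev (map length (A::int list list)))"
  shows "set (concat (transpose A)) = set (concat A)"
proof -
  have "x \<in> set (concat (transpose A)) \<longleftrightarrow> x \<in> set (concat A)" for x
    unfolding at_ex_set at_transpose[OF s] by blast
  then show ?thesis by blast
qed

lemma ordB_T:
  assumes st: "standard_tableau n T" and xr: "x \<in> {1..int n}" and yr: "y \<in> {1..int n}"
  shows "precedes x y (rev (reading_word T)) \<longleftrightarrow> ordB (roT T) (coT T) x y"
proof -
  note f = std_facts[OF st]
  have cx: "atc T x (roT T x) (coT T x)" and cy: "atc T y (roT T y) (coT T y)"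
    using cellT_at f(4) xr yr by blast+
  let ?L = "length T"
  have "precedes x y (rev (reading_word T)) \<longleftrightarrow> precedes y x (concat (rev T))"
    by (simp add: prec_rev reading_word_def)
  also have "\<dots> \<longleftrightarrow> (\<exists>i j i' j'. (i < ?L \<and> atc T y (?L - Suc i) j) \<and> (i' < ?L \<and> atc T x (?L - Suc i') j') \<and> (i < i' \<or> i = i' \<and> j < j'))"
    by (simp add: prec_concat at_rev)
  also have "\<dots> \<longleftrightarrow> ordB (roT T) (coT T) x y"
  proof
    assume "\<exists>i j i' j'. (i < ?L \<and> atc T y (?L - Suc i) j) \<and> (i' < ?L \<and> atc T x (?L - Suc i') j') \<and> (i < i' \<or> i = i' \<and> j < j')"
    then obtain i j i' j' where h: "i < ?L" "atc T y (?L - Suc i) j" "i' < ?L" "atc T x (?L - Suc i') j'" "i < i' \<or> i = i' \<and> j < j'"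
      by blast
    have "roT T y = ?L - Suc i" "coT T y = j" "roT T x = ?L - Suc i'" "coT T x = j'"
      using cellT_uniq[OF f(3) h(2)] cellT_uniq[OF f(3) h(4)] by auto
    then show "ordB (roT T) (coT T) x y" using h(1,3,5) unfolding ordB_def by auto
  next
    assume o: "ordB (roT T) (coT T) x y"
    have l: "roT T x < ?L" "roT T y < ?L" using cx cy by (auto simp: atc_def)
    have e: "?L - Suc (?L - Suc (roT T y)) = roT T y" "?L - Suc (?L - Suc (roT T x)) = roT T x" using l by auto
    show "\<exists>i j i' j'. (i < ?L \<and> atc T y (?L - Suc i) j) \<and> (i' < ?L \<and> atc T x (?L - Suc i') j') \<and> (i < i' \<or> i = i' \<and> j < j')"
      apply (rule exI[of _ "?L - Suc (roT T y)"], rule exI[of _ "coT T y"], rule exI[of _ "?L - Suc (roT T x)"], rule exI[of _ "coT T x"])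
      using e l cx cy o unfolding ordB_def by auto
  qed
  finally show ?thesis .
qed

lemma ordA_T:
  assumes st: "standard_tableau n T" and xr: "x \<in> {1..int n}" and yr: "y \<in> {1..int n}"
  shows "precedes x y (reading_word (tab_transpose T)) \<longleftrightarrow> ordA (roT T) (coT T) x y"
proof -
  note f = std_facts[OF st]
  have cx: "atc T x (roT T x) (coT T x)" and cy: "atc T y (roT T y) (coT T y)"
    using cellT_at f(4) xr yr by blast+
  let ?L = "length (transpose T)"
  have "precedes x y (reading_word (tab_transpose T)) \<longleftrightarrow> precedes x y (concat (rev (transpose T)))"
    by (simp add: reading_word_def tab_transpose_def)
  also have "\<dots> \<longleftrightarrow> (\<exists>i j i' j'. (i < ?L \<and> atc T x j (?L - Suc i)) \<and> (i' < ?L \<and> atc T y j' (?L - Suc i')) \<and> (i < i' \<or> i = i' \<and> j < j'))"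
    by (simp add: prec_concat at_rev at_transpose[OF f(2)])
  also have "\<dots> \<longleftrightarrow> ordA (roT T) (coT T) x y"
  proof
    assume "\<exists>i j i' j'. (i < ?L \<and> atc T x j (?L - Suc i)) \<and> (i' < ?L \<and> atc T y j' (?L - Suc i')) \<and> (i < i' \<or> i = i' \<and> j < j')"
    then obtain i j i' j' where h: "i < ?L" "atc T x j (?L - Suc i)" "i' < ?L" "atc T y j' (?L - Suc i')" "i < i' \<or> i = i' \<and> j < j'"
      by blast
    have "roT T x = j" "coT T x = ?L - Suc i" "roT T y = j'" "coT T y = ?L - Suc i'"
      using cellT_uniq[OF f(3) h(2)] cellT_uniq[OF f(3) h(4)] by auto
    then show "ordA (roT T) (coT T) x y" using h(1,3,5) unfolding ordA_def by auto
  next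
    assume o: "ordA (roT T) (coT T) x y"
    have "atc (transpose T) x (coT T x) (roT T x)" "atc (transpose T) y (coT T y) (roT T y)"
      using cx cy at_transpose[OF f(2)] by blast+
    then have l: "coT T x < ?L" "coT T y < ?L" by (auto simp: atc_def)
    have e: "?L - Suc (?L - Suc (coT T y)) = coT T y" "?L - Suc (?L - Suc (coT T x)) = coT T x" using l by auto
    show "\<exists>i j i' j'. (i < ?L \<and> atc T x j (?L - Suc i)) \<and> (i' < ?L \<and> atc T y j' (?L - Suc i')) \<and> (i < i' \<or> i = i' \<and> j < j')"
      apply (rule exI[of _ "?L - Suc (coT T x)"], rule exI[of _ "roT T x"], rule exI[of _ "?L - Suc (coT T y)"], rule exI[of _ "roT T y"])
      using e l cx cy o unfolding ordA_def by auto
  qed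
  finally show ?thesis .
qed

context geo begin
lemma GI0:
  assumes n2: "2 \<le> n" and o: "ordB ro co 1 2"
  shows "GI ro co 0 1 2"
proof -
  have r1: "(1::int) \<in> {1..int n}" and r2: "(2::int) \<in> {1..int n}" using n2 by auto
  have lt: "ro 1 < ro 2"
  proof (rule ccontr)
    assume "\<not> ro 1 < ro 2"
    then have "ro 2 \<le> ro 1" "co 2 \<le> co 1" using o unfolding ordB_def by auto
    then have "(2::int) \<le> 1" using mono[OF r2 r1] by blast
    then show False by simp
  qed
  have c: "co 2 \<le> co 1"
  proof (rule ccontr)
    assume "\<not> co 2 \<le> co 1"
    then obtain w where w: "w \<in> {1..int n}" "ro w = ro 1" "co w = co 2"
      using shp[OF r2, of "ro 1" "co 2"] lt by auto
    have "w \<le> 2" using mono[OF w(1) r2] w lt by auto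
    moreover have "w \<noteq> 2" "w \<noteq> 1" using w lt \<open>\<not> co 2 \<le> co 1\<close> by auto
    ultimately show False using w(1) by auto
  qed
  show ?thesis unfolding GI_def using lt c by auto
qed
end

lemma pr_agree_range:
  assumes "\<forall>x\<in>{1..int n}. \<forall>y\<in>{1..int n}. lt1 x y = lt2 x y" and "m \<le> n - 2"
  shows "lab lt1 m = lab lt2 m"
proof -
  have "\<forall>m<n - 2. \<forall>x\<in>{fst (pr lt1 m), snd (pr lt1 m), int m + 3}. \<forall>y\<in>{fst (pr lt1 m), snd (pr lt1 m), int m + 3}. lt1 x y = lt2 x y"
  proof (intro allI impI)
    fix m assume m: "m < n - 2"
    have "1 \<le> fst (pr lt1 m)" "fst (pr lt1 m) \<le> int m + 2" "1 \<le> snd (pr lt1 m)" "snd (pr lt1 m) \<le> int m + 2"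
      using LabInv_all[of lt1 m] unfolding LabInv_def Let_def by auto
    then have "{fst (pr lt1 m), snd (pr lt1 m), int m + 3} \<subseteq> {1..int n}" using m by auto
    then show "\<forall>x\<in>{fst (pr lt1 m), snd (pr lt1 m), int m + 3}. \<forall>y\<in>{fst (pr lt1 m), snd (pr lt1 m), int m + 3}. lt1 x y = lt2 x y"
      using assms(1) by blast
  qed
  from pr_agree[OF this assms(2)] show ?thesis by simp
qed

lemma refill_concat: "refill (map length L) (concat L) = L"
  by (induction L) auto

lemma tab_op_map:
  assumes "f (reading_word X) = map g (reading_word X)"
  shows "tab_op f X = map (map g) X"
proof -
  have "tab_op f X = rev (refill (map length (map (map g) (rev X))) (concat (map (map g) (rev X))))"
    using assms by (simp add: tab_op_def reading_word_def map_concat comp_def)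
  also have "\<dots> = map (map g) X" by (simp only: refill_concat) (simp add: rev_map)
  finally show ?thesis .
qed

lemma part1:
  assumes st: "standard_tableau n T" and n2: "2 \<le> n" and pr21: "precedes 2 1 (reading_word T)"
  shows "B2_1 T = R_op (int n - 1) (tab_op (\<lambda>w. sigmabar_chain n (r_op 1 0 1 1 (tau_m1 w))) T)"
proof -
  note f = std_facts[OF st]
  interpret geo "roT T" "coT T" n by (rule std_geo[OF st])
  define ro where "ro = roT T"
  define co where "co = coT T"
  have r12: "(1::int) \<in> {1..int n}" "(2::int) \<in> {1..int n}" using n2 by auto
  have "ordB ro co 1 2" using ordB_T[OF st r12] pr21 prec_rev unfolding ro_def co_def by blast
  then have G0: "GI ro co 0 1 2" using GI0[OF n2] unfolding ro_def co_def by blast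
  define uA where "uA = reading_word (tab_transpose T)"
  define uB where "uB = rev (reading_word T)"
  define \<Phi> where "\<Phi> = lab (ordB ro co) (n - 2)"
  have suA: "set uA = {1..int n}" "distinct uA"
    unfolding uA_def reading_word_def tab_transpose_def
    using set_concat_transpose[OF f(2)] distinct_concat_transpose[OF f(2)] f(3,4)
    by (simp_all add: distinct_concat_rev)
  have suB: "set uB = {1..int n}" "distinct uB"
    unfolding uB_def reading_word_def using f(3,4) by (simp_all add: distinct_concat_rev)
  have labA: "lab (\<lambda>x y. precedes x y uA) (n - 2) = \<Phi>"
  proof -
    have "lab (\<lambda>x y. precedes x y uA) (n - 2) = lab (ordA ro co) (n - 2)"
      by (rule pr_agree_range[of n]) (auto simp: uA_def ordA_T[OF st] ro_def co_def)
    also have "\<dots> = lab (ordB ro co) (n - 2)"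
      using pr_agree[OF agree_AB[OF G0[unfolded ro_def co_def]], of "n - 2"] unfolding ro_def co_def by simp
    finally show ?thesis unfolding \<Phi>_def .
  qed
  have labB: "lab (\<lambda>x y. precedes x y uB) (n - 2) = \<Phi>"
    unfolding \<Phi>_def
    by (rule pr_agree_range[of n]) (auto simp: uB_def ordB_T[OF st] ro_def co_def)
  have lenTt: "length (concat (tab_transpose T)) = n"
  proof -
    have "set (concat (transpose T)) = {1..int n}" "distinct (concat (transpose T))"
      using set_concat_transpose[OF f(2)] distinct_concat_transpose[OF f(2)] f(3,4) by auto
    then have "length (concat (transpose T)) = card {1..int n}" by (metis distinct_card)
    then show ?thesis by (simp add: tab_transpose_def)
  qed
  define v where "v = int n - 1"
  have LHS: "B2_1 T = transpose (R_op v (transpose (map (map \<Phi>) T)))"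
  proof -
    have "sigma_chain n (r_op 0 1 1 1 (tau_m1 uA)) = map \<Phi> uA"
      using chain_word[OF suA(2) suA(1) n2] labA by simp
    then have "tab_op (\<lambda>w. sigma_chain n (r_op 0 1 1 1 (tau_m1 w))) (tab_transpose T) = map (map \<Phi>) (tab_transpose T)"
      by (intro tab_op_map) (simp add: uA_def)
    then show ?thesis
      using lenTt by (simp add: B2_1_def B2_0_def Let_def v_def tab_transpose_def transpose_map_map)
  qed
  have RHS: "R_op (int n - 1) (tab_op (\<lambda>w. sigmabar_chain n (r_op 1 0 1 1 (tau_m1 w))) T) = R_op v (map (map \<Phi>) T)"
  proof -
    have r: "rev (r_op 1 0 1 1 (tau_m1 w)) = r_op 0 1 1 1 (tau_m1 (rev w))" for w
      by (induction w) (auto simp: r_op_def tau_m1_def)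
    have "sigmabar_chain n (r_op 1 0 1 1 (tau_m1 (reading_word T))) =
          rev (sigma_chain n (r_op 0 1 1 1 (tau_m1 uB)))"
      by (simp only: sigmabar_chain_rev r uB_def)
    also have "\<dots> = map \<Phi> (reading_word T)"
      using chain_word[OF suB(2) suB(1) n2] labB by (simp add: uB_def rev_map)
    finally show ?thesis by (subst tab_op_map) (auto simp: v_def)
  qed
  define M where "M = map (map \<Phi>) T"
  define p where "p = fst (pr (ordB ro co) (n - 2))"
  define q where "q = snd (pr (ordB ro co) (n - 2))"
  have Gf: "GI ro co (n - 2) p q" using GI_all[OF G0[unfolded ro_def co_def], of "n - 2"] unfolding p_def q_def ro_def co_def by simp
  have LI: "\<And>x. x \<ge> 1 \<Longrightarrow> x = p \<or> x = q \<Longrightarrow> \<Phi> x = v"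
       "\<And>x. x \<ge> 1 \<Longrightarrow> x \<le> int n \<Longrightarrow> x \<noteq> p \<Longrightarrow> x \<noteq> q \<Longrightarrow> \<Phi> x \<noteq> v"
    using LabInv_all[of "ordB ro co" "n - 2"] n2 unfolding LabInv_def Let_def p_def q_def \<Phi>_def v_def
    by (auto simp: of_nat_diff)
  have ucM: "UC v M"
    unfolding UC_def
  proof (intro allI impI)
    fix i j i' j' assume h: "atc M v i j" "i \<le> i'" "j \<le> j'" "i' < length M" "j' < length (M ! i')"
    have ax: "atc T (T ! i ! j) i j" and ay: "atc T (T ! i' ! j') i' j'" using h by (auto simp: atc_def M_def)
    have xr: "T ! i ! j \<in> {1..int n}" and yr: "T ! i' ! j' \<in> {1..int n}" using ax ay at_ex_set f(4) by blast+
    have "\<Phi> (T ! i ! j) = v" using h by (auto simp: atc_def M_def)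
    then have xpq: "T ! i ! j = p \<or> T ! i ! j = q" using LI(2) xr by fastforce
    have cx: "ro (T ! i ! j) = i" "co (T ! i ! j) = j" "ro (T ! i' ! j') = i'" "co (T ! i' ! j') = j'"
      using cellT_uniq[OF f(3) ax] cellT_uniq[OF f(3) ay] unfolding ro_def co_def by auto
    show "M ! i' ! j' = v"
    proof (rule ccontr)
      assume "M ! i' ! j' \<noteq> v"
      then have "\<Phi> (T ! i' ! j') \<noteq> v" using h by (auto simp: M_def)
      then have ny: "T ! i' ! j' \<noteq> p" "T ! i' ! j' \<noteq> q" using LI(1) yr by auto
      have "T ! i' ! j' \<in> {1..int (n - 2) + 2}" using yr n2 by auto
      then show False using Gf ny xpq cx h(2,3) unfolding GI_def by auto
    qed
  qed
  have sM: "sorted (rev (map length M))" using f(2) by (simp add: M_def comp_def)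
  have neM: "\<forall>r\<in>set M. r \<noteq> []" using f(1) by (auto simp: M_def)
  show ?thesis using LHS RHS RT[OF sM neM ucM] unfolding M_def by simp
qed

theorem mainTheorem14:
  shows "(\<forall>(T::tableau) n. standard_tableau n T \<and> 2 \<le> n \<and> precedes 2 1 (reading_word T) \<longrightarrow>
            B2_1 T = R_op (int n - 1)
                       (tab_op (\<lambda>w. sigmabar_chain n (r_op 1 0 1 1 (tau_m1 w))) T))
       \<and> (\<forall>(w::word) (a::int). (count_list w a, count_list w (a + 1)) \<in> {(1,2),(2,1)} \<longrightarrow>
            sigma_op a (rev w) = rev (sigmabar_op a w))"
    using part1 sigma_rev by blast

end
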